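(* Let $a(n,k)$ be the number of non-squashing partitions of $n$ into exactly $k$ parts and $b(n,k)$ the number of non-squashing partitions of $n$ into exactly $k$ distinct parts (with $a(n,k)=0$ for $n<0$). Then $b(n,0)=a(n,0)$ and $b(n,1)=a(n,1)$ for all $n\ge0$, and $b(n,k)=a(n-2^{k-2},k)$ for all $n\ge0$, $k\ge2$. Moreover, for $k\ge2$, $$\sum_{n\ge0}b(n,k)x^n=\frac{x^{3\cdot2^{k-2}}}{\prod_{j=0}^{k-1}\left(1-x^{2^j}\right)},$$ so that for $k\ge2$, $b(n,k)$ equals the number of partitions of $n-3\cdot2^{k-2}$ into powers of $2$ not exceeding $2^{k-1}$.
   Context: A partition $n=p_1+\cdots+p_k$ with $1\le p_1\le\cdots\le p_k$ is non-squashing if $p_1+\cdots+p_j\le p_{j+1}$ for all $1\le j\le k-1$. The empty partition is the unique partition of $0$ and has $0$ parts. *)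

theory Defs
  imports Main "HOL-Computational_Algebra.Formal_Power_Series"
begin

definition is_partition :: "nat \<Rightarrow> nat list \<Rightarrow> bool" where
  "is_partition n ps \<longleftrightarrow> sorted ps \<and> (\<forall>p\<in>set ps. 1 \<le> p) \<and> sum_list ps = n"

text \<open>Non-squashing: p_1 + ... + p_j \<le> p_(j+1) for all 1 \<le> j \<le> k-1
  (0-based: sum of the first j parts \<le> ps ! j for 1 \<le> j < length ps).\<close>
definition non_squashing :: "nat list \<Rightarrow> bool" where
  "non_squashing ps \<longleftrightarrow> (\<forall>j. 1 \<le> j \<and> j < length ps \<longrightarrow> sum_list (take j ps) \<le> ps ! j)"

definition nsq_a :: "int \<Rightarrow> nat \<Rightarrow> nat" where
  "nsq_a n k = (if n < 0 then 0 else
     card {ps. is_partition (nat n) ps \<and> non_squashing ps \<and> length ps = k})"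

definition nsq_b :: "int \<Rightarrow> nat \<Rightarrow> nat" where
  "nsq_b n k = (if n < 0 then 0 else
     card {ps. is_partition (nat n) ps \<and> non_squashing ps \<and> length ps = k \<and> distinct ps})"

definition pow2_parts :: "int \<Rightarrow> nat \<Rightarrow> nat" where
  "pow2_parts m k = (if m < 0 then 0 else
     card {ps. is_partition (nat m) ps \<and> (\<forall>p\<in>set ps. \<exists>j<k. p = 2 ^ j)})"

end

theory Submission
  imports Defs
begin

definition NS :: "nat \<Rightarrow> nat \<Rightarrow> nat list set" where
  "NS n k = {ps. is_partition n ps \<and> non_squashing ps \<and> length ps = k}"
definition DNS :: "nat \<Rightarrow> nat \<Rightarrow> nat list set" where
  "DNS n k = {ps. is_partition n ps \<and> non_squashing ps \<and> length ps = k \<and> distinct ps}"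
definition PS :: "nat \<Rightarrow> nat \<Rightarrow> nat list set" where
  "PS k m = {ps. is_partition m ps \<and> (\<forall>p\<in>set ps. \<exists>j<k. p = 2 ^ j)}"
definition PP :: "nat \<Rightarrow> nat \<Rightarrow> nat" where
  "PP k m = card (PS k m)"
definition Z :: "nat \<Rightarrow> nat \<Rightarrow> nat \<Rightarrow> nat" where
  "Z k c n = (if c \<le> n then PP k (n - c) else 0)"

lemma length_le_sum: "\<forall>p\<in>set ps. 1 \<le> (p::nat) \<Longrightarrow> length ps \<le> sum_list ps"
  by (induction ps) auto

lemma finite_part: "finite {ps. is_partition n ps}"
proof (rule finite_subset)
  show "{ps. is_partition n ps} \<subseteq> {xs. set xs \<subseteq> {..n} \<and> length xs \<le> n}"
    using length_le_sum member_le_sum_list unfolding is_partition_def by fastforce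
  show "finite {xs. set xs \<subseteq> {..n} \<and> length xs \<le> n}"
    by (rule finite_lists_length_le) simp
qed

lemma finite_NS: "finite (NS n k)"
  by (rule finite_subset[OF _ finite_part[of n]]) (auto simp: NS_def)
lemma finite_DNS: "finite (DNS n k)"
  by (rule finite_subset[OF _ finite_part[of n]]) (auto simp: DNS_def)
lemma finite_PS: "finite (PS k n)"
  by (rule finite_subset[OF _ finite_part[of n]]) (auto simp: PS_def)

lemma ns_snoc:
  assumes "ps \<noteq> []"
  shows "non_squashing (ps @ [p]) \<longleftrightarrow> non_squashing ps \<and> sum_list ps \<le> p"
proof -
  have "non_squashing (ps @ [p]) \<longleftrightarrow>
     (\<forall>j. 1 \<le> j \<and> (j < length ps \<or> j = length ps) \<longrightarrow> sum_list (take j (ps@[p])) \<le> (ps@[p]) ! j)"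
    unfolding non_squashing_def by (auto simp: less_Suc_eq)
  also have "\<dots> \<longleftrightarrow> (\<forall>j. 1 \<le> j \<and> j < length ps \<longrightarrow> sum_list (take j ps) \<le> ps ! j)
       \<and> sum_list ps \<le> p"
    using assms by (auto simp: nth_append Suc_le_eq)
  finally show ?thesis unfolding non_squashing_def .
qed

lemma ns_single: "non_squashing [x]"
  unfolding non_squashing_def by auto

lemma elem_lt_sum:
  assumes "\<forall>p\<in>set ps. 1 \<le> (p::nat)" "length ps \<ge> 2" "x \<in> set ps"
  shows "x < sum_list ps"
proof -
  have "sum_list ps = x + sum_list (remove1 x ps)"
    using sum_list_map_remove1[OF assms(3), of id] by simp
  moreover have "length (remove1 x ps) \<ge> 1" using assms(2,3) by (simp add: length_remove1)
  moreover have "\<forall>p\<in>set (remove1 x ps). 1 \<le> p" using assms(1) by (meson notin_set_remove1)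
  ultimately show ?thesis using length_le_sum[of "remove1 x ps"] by linarith
qed

lemma NS_Suc:
  assumes k: "k \<ge> 1"
  shows "NS n (Suc k) = (\<Union>S\<in>{..n div 2}. (\<lambda>ps. ps @ [n - S]) ` NS S k)"
proof
  show "NS n (Suc k) \<subseteq> (\<Union>S\<in>{..n div 2}. (\<lambda>ps. ps @ [n - S]) ` NS S k)"
  proof
    fix xs assume xs: "xs \<in> NS n (Suc k)"
    then have ne: "xs \<noteq> []" by (auto simp: NS_def)
    define ps where "ps = butlast xs"
    define p where "p = last xs"
    have xe: "xs = ps @ [p]" using ne by (simp add: ps_def p_def)
    have lp: "length ps = k" using xs by (simp add: NS_def ps_def)
    with k have pne: "ps \<noteq> []" by auto
    have ns: "non_squashing ps" "sum_list ps \<le> p"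
      using xs ns_snoc[OF pne, of p] by (auto simp: NS_def xe)
    have ip: "sorted ps" "\<forall>q\<in>set ps. 1 \<le> q" "sum_list ps + p = n"
      using xs by (auto simp: NS_def xe is_partition_def sorted_append)
    have "ps \<in> NS (sum_list ps) k" using ns ip lp by (auto simp: NS_def is_partition_def)
    moreover have "sum_list ps \<in> {..n div 2}" using ns ip by auto
    moreover have "xs = ps @ [n - sum_list ps]" using xe ip by auto
    ultimately show "xs \<in> (\<Union>S\<in>{..n div 2}. (\<lambda>ps. ps @ [n - S]) ` NS S k)" by blast
  qed
  show "(\<Union>S\<in>{..n div 2}. (\<lambda>ps. ps @ [n - S]) ` NS S k) \<subseteq> NS n (Suc k)"
  proof
    fix xs assume "xs \<in> (\<Union>S\<in>{..n div 2}. (\<lambda>ps. ps @ [n - S]) ` NS S k)"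
    then obtain S ps where S: "S \<in> {..n div 2}" and ps: "ps \<in> NS S k" and xe: "xs = ps @ [n - S]" by blast
    have lp: "length ps = k" and ns: "non_squashing ps" and ip: "sorted ps" "\<forall>q\<in>set ps. 1 \<le> q" "sum_list ps = S"
      using ps by (auto simp: NS_def is_partition_def)
    have pne: "ps \<noteq> []" using lp k by auto
    have "S \<ge> 1" using length_le_sum[OF ip(2)] lp k ip(3) by simp
    moreover have "S \<le> n - S" using S by auto
    moreover have "\<forall>x\<in>set ps. x \<le> n - S" using member_le_sum_list[of _ ps] ip(3) S by fastforce
    ultimately show "xs \<in> NS n (Suc k)" unfolding xe
      using ns_snoc[OF pne, of "n - S"] ns ip lp S
      by (auto simp: NS_def is_partition_def sorted_append)
  qed
qed

lemma card_NS_Suc: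
  assumes k: "k \<ge> 1"
  shows "card (NS n (Suc k)) = (\<Sum>S\<le>n div 2. card (NS S k))"
proof -
  have "card (NS n (Suc k)) = (\<Sum>S\<le>n div 2. card ((\<lambda>ps. ps @ [n - S]) ` NS S k))"
    unfolding NS_Suc[OF k]
    by (rule card_UN_disjoint) (auto simp: finite_NS)
  also have "\<dots> = (\<Sum>S\<le>n div 2. card (NS S k))"
    by (rule sum.cong) (auto intro!: card_image simp: inj_on_def)
  finally show ?thesis .
qed

lemma DNS_Suc:
  assumes k: "k \<ge> 2"
  shows "DNS n (Suc k) = (\<Union>S\<in>{..n div 2}. (\<lambda>ps. ps @ [n - S]) ` DNS S k)"
proof
  show "DNS n (Suc k) \<subseteq> (\<Union>S\<in>{..n div 2}. (\<lambda>ps. ps @ [n - S]) ` DNS S k)"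
  proof
    fix xs assume xs: "xs \<in> DNS n (Suc k)"
    then have ne: "xs \<noteq> []" by (auto simp: DNS_def)
    define ps where "ps = butlast xs"
    define p where "p = last xs"
    have xe: "xs = ps @ [p]" using ne by (simp add: ps_def p_def)
    have lp: "length ps = k" using xs by (simp add: DNS_def ps_def)
    with k have pne: "ps \<noteq> []" by auto
    have ns: "non_squashing ps" "sum_list ps \<le> p"
      using xs ns_snoc[OF pne, of p] by (auto simp: DNS_def xe)
    have ip: "sorted ps" "\<forall>q\<in>set ps. 1 \<le> q" "sum_list ps + p = n" "distinct ps"
      using xs by (auto simp: DNS_def xe is_partition_def sorted_append)
    have "ps \<in> DNS (sum_list ps) k" using ns ip lp by (auto simp: DNS_def is_partition_def)
    moreover have "sum_list ps \<in> {..n div 2}" using ns ip by auto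
    moreover have "xs = ps @ [n - sum_list ps]" using xe ip by auto
    ultimately show "xs \<in> (\<Union>S\<in>{..n div 2}. (\<lambda>ps. ps @ [n - S]) ` DNS S k)" by blast
  qed
  show "(\<Union>S\<in>{..n div 2}. (\<lambda>ps. ps @ [n - S]) ` DNS S k) \<subseteq> DNS n (Suc k)"
  proof
    fix xs assume "xs \<in> (\<Union>S\<in>{..n div 2}. (\<lambda>ps. ps @ [n - S]) ` DNS S k)"
    then obtain S ps where S: "S \<in> {..n div 2}" and ps: "ps \<in> DNS S k" and xe: "xs = ps @ [n - S]" by blast
    have lp: "length ps = k" and ns: "non_squashing ps" and ip: "sorted ps" "\<forall>q\<in>set ps. 1 \<le> q" "sum_list ps = S"
      and dp: "distinct ps"
      using ps by (auto simp: DNS_def is_partition_def)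
    have pne: "ps \<noteq> []" using lp k by auto
    have "S \<ge> 1" using length_le_sum[OF ip(2)] lp k ip(3) by simp
    moreover have "S \<le> n - S" using S by auto
    moreover have lt: "\<forall>x\<in>set ps. x < S" using elem_lt_sum[OF ip(2)] lp k ip(3) by auto
    moreover have "\<forall>x\<in>set ps. x \<le> n - S" using lt S by fastforce
    moreover have "n - S \<notin> set ps" using lt S by fastforce
    ultimately show "xs \<in> DNS n (Suc k)" unfolding xe
      using ns_snoc[OF pne, of "n - S"] ns ip lp S dp
      by (auto simp: DNS_def is_partition_def sorted_append)
  qed
qed

lemma card_DNS_Suc:
  assumes k: "k \<ge> 2"
  shows "card (DNS n (Suc k)) = (\<Sum>S\<le>n div 2. card (DNS S k))"
proof -
  have "card (DNS n (Suc k)) = (\<Sum>S\<le>n div 2. card ((\<lambda>ps. ps @ [n - S]) ` DNS S k))"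
    unfolding DNS_Suc[OF k]
    by (rule card_UN_disjoint) (auto simp: finite_DNS)
  also have "\<dots> = (\<Sum>S\<le>n div 2. card (DNS S k))"
    by (rule sum.cong) (auto intro!: card_image simp: inj_on_def)
  finally show ?thesis .
qed

lemma len1_eq: "length ps = Suc 0 \<longleftrightarrow> (\<exists>x. ps = [x])"
  by (cases ps) auto
lemma len2_eq: "length ps = 2 \<longleftrightarrow> (\<exists>x y. ps = [x, y])"
  by (cases ps; cases "tl ps") (auto simp: numeral_2_eq_2)

lemma NS_1: "NS n (Suc 0) = (if n \<ge> 1 then {[n]} else {})"
  by (auto simp: NS_def len1_eq is_partition_def ns_single)

lemma card_NS_1: "card (NS n (Suc 0)) = (if n \<ge> 1 then 1 else 0)"
  by (simp add: NS_1)

lemma DNS_2: "DNS n 2 = (\<lambda>x. [x, n - x]) ` {1..(n - 1) div 2}"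
proof -
  have ns2: "non_squashing [x, y] \<longleftrightarrow> x \<le> y" for x y :: nat
    using ns_snoc[of "[x]" y] ns_single by simp
  show ?thesis
    by (auto simp: DNS_def len2_eq is_partition_def ns2 image_iff)
qed

lemma card_DNS_2: "card (DNS n 2) = (n - 1) div 2"
  unfolding DNS_2 by (subst card_image) (auto simp: inj_on_def)

lemma NS_01: "k \<le> 1 \<Longrightarrow> DNS n k = NS n k"
  by (auto simp: DNS_def NS_def le_Suc_eq len1_eq)

lemma PS_0: "PS 0 m = (if m = 0 then {[]} else {})"
  by (auto simp: PS_def is_partition_def)

lemma PP_0: "PP 0 m = (if m = 0 then 1 else 0)"
  by (simp add: PP_def PS_0)

lemma sorted_last_ge: "sorted xs \<Longrightarrow> x \<in> set xs \<Longrightarrow> x \<le> last xs"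
  by (induction xs) (auto simp: sorted_append intro: order_trans)

lemma PS_Suc:
  "PS (Suc k) m = PS k m \<union> (if 2^k \<le> m then (\<lambda>ps. ps @ [2^k]) ` PS (Suc k) (m - 2^k) else {})"
proof
  show "PS (Suc k) m \<subseteq> PS k m \<union> (if 2^k \<le> m then (\<lambda>ps. ps @ [2^k]) ` PS (Suc k) (m - 2^k) else {})"
  proof
    fix xs assume xs: "xs \<in> PS (Suc k) m"
    show "xs \<in> PS k m \<union> (if 2^k \<le> m then (\<lambda>ps. ps @ [2^k]) ` PS (Suc k) (m - 2^k) else {})"
    proof (cases "2^k \<in> set xs")
      case False
      then have "xs \<in> PS k m" using xs by (auto simp: PS_def less_Suc_eq) 
      then show ?thesis by simp
    next
      case True
      then have ne: "xs \<noteq> []" by auto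
      have so: "sorted xs" using xs by (auto simp: PS_def is_partition_def)
      have "last xs \<in> set xs" using ne by simp
      then obtain j where j: "j < Suc k" "last xs = 2^j" using xs by (auto simp: PS_def)
      have "2^k \<le> last xs" using sorted_last_ge[OF so True] .
      moreover have "last xs \<le> (2::nat)^k" using j by (simp add: power_increasing)
      ultimately have L: "last xs = 2^k" by simp
      define ps where "ps = butlast xs"
      have xe: "xs = ps @ [2^k]" using ne L by (metis append_butlast_last_id ps_def)
      have "ps \<in> PS (Suc k) (m - 2^k)" "2^k \<le> m"
        using xs by (auto simp: PS_def xe is_partition_def sorted_append)
      then show ?thesis using xe by auto
    qed
  qed
  show "PS k m \<union> (if 2^k \<le> m then (\<lambda>ps. ps @ [2^k]) ` PS (Suc k) (m - 2^k) else {}) \<subseteq> PS (Suc k) m"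
  proof
    fix xs assume "xs \<in> PS k m \<union> (if 2^k \<le> m then (\<lambda>ps. ps @ [2^k]) ` PS (Suc k) (m - 2^k) else {})"
    then consider "xs \<in> PS k m" | ps where "2^k \<le> m" "ps \<in> PS (Suc k) (m - 2^k)" "xs = ps @ [2^k]"
      by (auto split: if_splits)
    then show "xs \<in> PS (Suc k) m"
    proof cases
      case 1 then show ?thesis by (auto simp: PS_def less_Suc_eq)
    next
      case 2
      have "\<forall>x\<in>set ps. x \<le> (2::nat)^k" using 2 by (auto simp: PS_def less_Suc_eq_le power_increasing)
      then show ?thesis using 2 by (auto simp: PS_def is_partition_def sorted_append)
    qed
  qed
qed

lemma PP_Suc: "PP (Suc k) m = PP k m + (if 2^k \<le> m then PP (Suc k) (m - 2^k) else 0)"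
proof -
  have d: "PS k m \<inter> (\<lambda>ps. ps @ [2^k]) ` PS (Suc k) (m - 2^k) = {}"
    by (auto simp: PS_def)
  show ?thesis
  proof (cases "2^k \<le> m")
    case True
    have "PP (Suc k) m = card (PS k m) + card ((\<lambda>ps. ps @ [2^k]) ` PS (Suc k) (m - 2^k))"
      unfolding PP_def PS_Suc[of k m] using True d
      by (simp add: card_Un_disjoint finite_PS)
    also have "card ((\<lambda>ps. ps @ [2^k]) ` PS (Suc k) (m - 2^k)) = PP (Suc k) (m - 2^k)"
      unfolding PP_def by (rule card_image) (auto simp: inj_on_def)
    finally show ?thesis using True by (simp add: PP_def)
  next
    case False
    then show ?thesis unfolding PP_def PS_Suc[of k m] by simp
  qed
qed

lemma PP_1: "PP (Suc 0) m = 1"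
  by (induction m) (auto simp: PP_Suc[of 0] PP_0)

lemma shift_sum:
  "(\<Sum>S\<le>(N::nat). (if c \<le> S then g (S - c) else 0)) = (if c \<le> N then (\<Sum>u\<le>N - c. g u) else (0::nat))"
proof (induction N)
  case 0 then show ?case by auto
next
  case (Suc N)
  show ?case
  proof (cases "c \<le> N")
    case True
    then show ?thesis using Suc by (simp add: Suc_diff_le)
  next
    case False
    then show ?thesis using Suc by (auto simp: not_le le_Suc_eq)
  qed
qed

lemma PP_half: "PP (Suc k) m = (\<Sum>u\<le>m div 2. PP k u)"
proof (induction k arbitrary: m)
  case 0
  then show ?case by (simp add: PP_1 PP_0)
next
  case (Suc k)
  show ?case
  proof (induction m rule: less_induct)
    case (less m)
    have "(\<Sum>u\<le>m div 2. PP (Suc k) u)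
        = (\<Sum>u\<le>m div 2. PP k u) + (\<Sum>u\<le>m div 2. (if 2^k \<le> u then PP (Suc k) (u - 2^k) else 0))"
      by (simp add: PP_Suc[of k] sum.distrib)
    also have "(\<Sum>u\<le>m div 2. PP k u) = PP (Suc k) m" using Suc.IH by simp
    also have "(\<Sum>u\<le>m div 2. (if 2^k \<le> u then PP (Suc k) (u - 2^k) else 0))
        = (if 2^k \<le> m div 2 then (\<Sum>u\<le>m div 2 - 2^k. PP (Suc k) u) else 0)"
      by (rule shift_sum)
    also have "\<dots> = (if 2^Suc k \<le> m then PP (Suc (Suc k)) (m - 2^Suc k) else 0)"
    proof (cases "2^Suc k \<le> m")
      case True
      have e: "m div 2 - 2^k = (m - 2^Suc k) div 2" using True by auto
      have "PP (Suc (Suc k)) (m - 2^Suc k) = (\<Sum>u\<le>(m - 2^Suc k) div 2. PP (Suc k) u)"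
      proof (rule less.IH)
        have "(0::nat) < 2^Suc k" by simp
        then show "m - 2^Suc k < m" using True by linarith
      qed
      then show ?thesis using True e by auto
    next
      case False
      then show ?thesis by auto
    qed
    finally show ?case by (simp add: PP_Suc[of "Suc k" m])
  qed
qed

lemma Z_half: "(\<Sum>S\<le>n div 2. Z k c S) = Z (Suc k) (2 * c) n"
proof -
  have "(\<Sum>S\<le>n div 2. Z k c S) = (if c \<le> n div 2 then (\<Sum>u\<le>n div 2 - c. PP k u) else 0)"
    unfolding Z_def by (rule shift_sum)
  also have "\<dots> = Z (Suc k) (2 * c) n"
  proof (cases "2 * c \<le> n")
    case True
    then have "n div 2 - c = (n - 2 * c) div 2" by auto
    then show ?thesis using True by (auto simp: Z_def PP_half)
  next
    case False
    then show ?thesis by (auto simp: Z_def)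
  qed
  finally show ?thesis .
qed

lemma card_NS_Z: "card (NS n (Suc j)) = Z (Suc j) (2^j) n"
proof (induction j arbitrary: n)
  case 0 then show ?case by (simp add: card_NS_1 Z_def PP_1)
next
  case (Suc j)
  have "card (NS n (Suc (Suc j))) = (\<Sum>S\<le>n div 2. card (NS S (Suc j)))"
    by (rule card_NS_Suc) simp
  also have "\<dots> = (\<Sum>S\<le>n div 2. Z (Suc j) (2^j) S)" using Suc by simp
  also have "\<dots> = Z (Suc (Suc j)) (2^Suc j) n" by (simp add: Z_half)
  finally show ?case .
qed

lemma PP_2: "PP (Suc (Suc 0)) m = m div 2 + 1"
  using PP_half[of "Suc 0" m] by (simp add: PP_1)

lemma card_DNS_Z: "card (DNS n (Suc (Suc j))) = Z (Suc (Suc j)) (3 * 2^j) n"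
proof (induction j arbitrary: n)
  case 0
  have "(n - 1) div 2 = (if 3 \<le> n then (n - 3) div 2 + 1 else 0)" by auto
  then show ?case using card_DNS_2[of n] by (simp add: Z_def PP_2 numeral_2_eq_2)
next
  case (Suc j)
  have "card (DNS n (Suc (Suc (Suc j)))) = (\<Sum>S\<le>n div 2. card (DNS S (Suc (Suc j))))"
    by (rule card_DNS_Suc) simp
  also have "\<dots> = (\<Sum>S\<le>n div 2. Z (Suc (Suc j)) (3 * 2^j) S)" using Suc by simp
  also have "\<dots> = Z (Suc (Suc (Suc j))) (3 * 2^Suc j) n" by (simp add: Z_half mult.left_commute)
  finally show ?case .
qed

definition F :: "nat \<Rightarrow> rat fps" where
  "F k = Abs_fps (\<lambda>n. of_nat (PP k n))"

lemma F_step: "F (Suc k) * (1 - fps_X ^ (2^k)) = F k"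
proof (rule fps_ext)
  fix n
  have "fps_nth (F (Suc k) * (1 - fps_X ^ (2^k))) n = fps_nth (F (Suc k)) n - fps_nth (fps_X ^ (2^k) * F (Suc k)) n"
    by (simp add: algebra_simps)
  also have "\<dots> = fps_nth (F k) n"
    unfolding fps_X_power_mult_nth by (simp add: F_def PP_Suc[of k n] not_less)
  finally show "fps_nth (F (Suc k) * (1 - fps_X ^ (2^k))) n = fps_nth (F k) n" .
qed

lemma F_prod: "F k * (\<Prod>j<k. (1 - fps_X ^ (2^j))) = 1"
proof (induction k)
  case 0
  show ?case by (rule fps_ext) (simp add: F_def PP_0)
next
  case (Suc k)
  have "F (Suc k) * (\<Prod>j<Suc k. (1 - fps_X ^ (2^j))) =
      (F (Suc k) * (1 - fps_X ^ (2^k))) * (\<Prod>j<k. (1 - fps_X ^ (2^j)))"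
    by (simp add: mult_ac)
  also have "\<dots> = 1" using Suc by (simp add: F_step)
  finally show ?case .
qed

lemma gf: "Abs_fps (\<lambda>n. of_nat (Z k c n)) =
   (fps_X ^ c :: rat fps) / (\<Prod>j<k. (1 - fps_X ^ (2^j)))"
proof -
  let ?P = "(\<Prod>j<k. (1 - fps_X ^ (2^j))) :: rat fps"
  have 1: "?P * F k = 1" using F_prod[of k] by (simp add: mult.commute)
  have inv: "inverse ?P = F k" by (rule fps_inverse_unique[OF 1])
  have "fps_nth ?P 0 * fps_nth (F k) 0 = 1" using arg_cong[OF 1, of "\<lambda>f. fps_nth f 0"] by simp
  then have p0: "fps_nth ?P 0 \<noteq> 0" by auto
  have "fps_X ^ c / ?P = fps_X ^ c * F k"
    using fps_divide_unit[OF p0, of "fps_X ^ c"] inv by simp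
  also have "\<dots> = Abs_fps (\<lambda>n. of_nat (Z k c n))"
    by (rule fps_ext) (simp add: fps_X_power_mult_nth F_def Z_def not_less)
  finally show ?thesis by simp
qed

lemma bdef: "nsq_b (int n) k = card (DNS n k)"
  by (simp add: nsq_b_def DNS_def)
lemma adef: "nsq_a (int n) k = card (NS n k)"
  by (simp add: nsq_a_def NS_def)

lemma bZ: "k \<ge> 2 \<Longrightarrow> nsq_b (int n) k = Z k (3 * 2^(k-2)) n"
proof -
  assume "k \<ge> 2"
  then obtain j where "k = Suc (Suc j)" by (metis add_2_eq_Suc le_Suc_ex)
  then show ?thesis by (simp only: bdef card_DNS_Z) simp
qed

lemma c1: "\<forall>n::nat. nsq_b (int n) 0 = nsq_a (int n) 0 \<and> nsq_b (int n) 1 = nsq_a (int n) 1"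
  unfolding adef bdef using NS_01[of 0] NS_01[of 1] by simp

lemma c2: "k \<ge> 2 \<Longrightarrow> nsq_b (int n) k = nsq_a (int n - 2 ^ (k - 2)) k"
proof -
  assume k: "k \<ge> 2"
  obtain j where kj: "k = Suc (Suc j)" using k by (metis add_2_eq_Suc le_Suc_ex)
  have k2: "k - 2 = j" using kj by simp
  show ?thesis
  proof (cases "2^j \<le> n")
    case True
    have e: "int n - 2 ^ (k - 2) = int (n - 2^j)" unfolding k2 using True by (simp add: of_nat_diff)
    have "nsq_a (int n - 2 ^ (k - 2)) k = card (NS (n - 2^j) (Suc (Suc j)))"
      by (subst e, subst adef, simp only: kj)
    also have "\<dots> = Z (Suc (Suc j)) (2 * 2^j) (n - 2^j)" by (simp only: card_NS_Z power_Suc)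
    also have "\<dots> = Z k (3 * 2^(k-2)) n"
    proof -
      have h1: "(2*2^j \<le> n - 2^j) = (3*2^j \<le> (n::nat))" using True by linarith
      have h2: "n - 2^j - 2*2^j = n - 3*2^j" by linarith
      show ?thesis unfolding Z_def h1 h2 k2 by (simp only: kj)
    qed
    finally show ?thesis using bZ[OF k] by simp
  next
    case False
    then have "int n < 2 ^ j" by (metis not_le of_nat_less_iff of_nat_numeral of_nat_power)
    then have "int n - 2 ^ (k - 2) < 0" unfolding k2 by simp
    then have "nsq_a (int n - 2 ^ (k - 2)) k = 0" by (simp add: nsq_a_def)
    moreover have "Z k (3 * 2^(k-2)) n = 0" unfolding k2 Z_def using False by simp
    ultimately show ?thesis using bZ[OF k] by simp
  qed
qed

lemma c3: "k \<ge> 2 \<Longrightarrow> Abs_fps (\<lambda>n. of_nat (nsq_b (int n) k)) =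
           (fps_X ^ (3 * 2 ^ (k - 2)) :: rat fps) / (\<Prod>j<k. (1 - fps_X ^ (2 ^ j)))"
  by (simp only: bZ gf)

lemma c4: "k \<ge> 2 \<Longrightarrow> nsq_b (int n) k = pow2_parts (int n - 3 * 2 ^ (k - 2)) k"
proof -
  assume k: "k \<ge> 2"
  show ?thesis
  proof (cases "3 * 2^(k-2) \<le> n")
    case True
    have e: "int n - 3 * 2 ^ (k - 2) = int (n - 3 * 2^(k-2))" using True by (simp add: of_nat_diff)
    have "pow2_parts (int n - 3 * 2 ^ (k - 2)) k = card (PS k (n - 3 * 2^(k-2)))"
      by (subst e, simp add: pow2_parts_def PS_def)
    then show ?thesis using True bZ[OF k] by (simp add: Z_def PP_def)
  next
    case False
    then have "int n < 3 * 2 ^ (k-2)" by (metis not_le of_nat_less_iff of_nat_numeral of_nat_power of_nat_mult)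
    then have "int n - 3 * 2 ^ (k - 2) < 0" by simp
    then show ?thesis using False bZ[OF k] by (simp add: pow2_parts_def Z_def)
  qed
qed

theorem theorem4:
  shows "(\<forall>n::nat. nsq_b (int n) 0 = nsq_a (int n) 0 \<and> nsq_b (int n) 1 = nsq_a (int n) 1)
    \<and> (\<forall>n::nat. \<forall>k::nat. k \<ge> 2 \<longrightarrow> nsq_b (int n) k = nsq_a (int n - 2 ^ (k - 2)) k)
    \<and> (\<forall>k::nat. k \<ge> 2 \<longrightarrow>
         Abs_fps (\<lambda>n. of_nat (nsq_b (int n) k)) =
           (fps_X ^ (3 * 2 ^ (k - 2)) :: rat fps) / (\<Prod>j<k. (1 - fps_X ^ (2 ^ j))))
    \<and> (\<forall>n::nat. \<forall>k::nat. k \<ge> 2 \<longrightarrow> nsq_b (int n) k = pow2_parts (int n - 3 * 2 ^ (k - 2)) k)"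
  using c1 c2 c3 c4 by blast

end
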